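(* Consider the DP-Ditto algorithm described in the context, with personalized learning rate $\eta_{\mathrm{L}}>0$ and weighting coefficient $\lambda\in[0,2]$. Assume: (i) each $F_n$ is $\mu$-strongly convex and $L$-smooth, so that in particular $F(\boldsymbol{\omega})-F(\boldsymbol{\omega}^{\ast})\le \frac{1}{2\mu}\|\nabla F(\boldsymbol{\omega})\|^2$ and $\|\nabla F(\boldsymbol{\omega})-\nabla F(\boldsymbol{\omega}')\|\le L\|\boldsymbol{\omega}-\boldsymbol{\omega}'\|$; (ii) $\eta_{\mathrm{G}}\le 2/L$ and $\mu>\frac{2-2\lambda}{2-\lambda}$; (iii) the expected squared gradient norms of each $F_n$ at the iterates are bounded: $\mathbb{E}\|\nabla F_n(\cdot)\|^2\le G_0^2$ evaluated at the global and personalized iterates; (iv) $\|\boldsymbol{u}_n^{\ast}-\boldsymbol{\omega}^{\ast}\|\le M$ for every $n$. Then for every client $n$ and every round $t$, $$\mathbb{E}\big[\|\tilde{\boldsymbol{\varpi}}_n^{t+1}-\boldsymbol{\varpi}_n^{\ast}\|^2\big]\le \varepsilon_{\mathrm{L}}\,\mathbb{E}\big[\|\tilde{\boldsymbol{\varpi}}_n^{t}-\boldsymbol{\varpi}_n^{\ast}\|^2\big]+(\eta_{\mathrm{L}}^2+\eta_{\mathrm{L}}^2\lambda^2)G+\frac{4\eta_{\mathrm{L}}^2\lambda^2+2\eta_{\mathrm{L}}\lambda^2}{\mu}\,\mathbb{E}\big[F(\tilde{\boldsymbol{\omega}}^t)-F(\boldsymbol{\omega}^{\ast})\big],$$ where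 $G=\Big(\big(1-\frac{\lambda}{2}\big)G_0+\lambda\big(\frac{G_0}{\mu}+M\big)\Big)^2$ and $\varepsilon_{\mathrm{L}}=1-\eta_{\mathrm{L}}\big(\big(1-\frac{\lambda}{2}\big)\mu+\lambda\big)+\eta_{\mathrm{L}}$. Moreover, $\varepsilon_{\mathrm{L}}$ is increasing in $\lambda$ when $\mu>2$.
   Context: There are $N$ clients with local loss functions $F_n:\mathbb{R}^d\to\mathbb{R}$, $n=1,\dots,N$, and global loss $F(\boldsymbol{\omega})=\frac{1}{N}\sum_{n=1}^N F_n(\boldsymbol{\omega})$. Let $\boldsymbol{\omega}^{\ast}=\arg\min_{\boldsymbol{\omega}}F(\boldsymbol{\omega})$, $\boldsymbol{u}_n^{\ast}=\arg\min_{\boldsymbol{u}}F_n(\boldsymbol{u})$. For $\lambda\in[0,2]$ define the personalized objective $f_n(\boldsymbol{\varpi};\boldsymbol{\omega})=(1-\frac{\lambda}{2})F_n(\boldsymbol{\varpi})+\frac{\lambda}{2}\|\boldsymbol{\varpi}-\boldsymbol{\omega}\|^2$ and $\boldsymbol{\varpi}_n^{\ast}=\arg\min_{\boldsymbol{\varpi}}f_n(\boldsymbol{\varpi};\boldsymbol{\omega}^{\ast})$. DP-Ditto: given a clipping threshold $C>0$, learning rates $\eta_{\mathrm{G}},\eta_{\mathrm{L}}>0$, privacy parameters $\epsilon>0,\delta\in(0,1)$, a number of rounds $T$, a sensitivity $\Delta s>0$ (equal to $2C/|\mathcal{D}_n|$ with $|\mathcal{D}_n|$ the local dataset size), initial global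 model $\tilde{\boldsymbol{\omega}}^0=\boldsymbol{\omega}^0$ and personalized models $\tilde{\boldsymbol{\varpi}}_n^0=\boldsymbol{\varpi}_n^0$, in each round $t=0,\dots,T-1$ every client $n$ sets $\boldsymbol{u}_n^t=\tilde{\boldsymbol{\omega}}^t$, computes $\boldsymbol{u}_n^{t+1}=\boldsymbol{u}_n^t-\eta_{\mathrm{G}}\nabla F_n(\boldsymbol{u}_n^t)$, clips $\boldsymbol{u}_n^{t+1}\leftarrow \boldsymbol{u}_n^{t+1}/\max(1,\|\boldsymbol{u}_n^{t+1}\|/C)$, uploads $\tilde{\boldsymbol{u}}_n^{t+1}=\boldsymbol{u}_n^{t+1}+\mathbf{z}_n^{t+1}$ with $\mathbf{z}_n^{t+1}\sim\mathcal{N}(0,\sigma_u^2\mathbf{I}_d)$ i.i.d. over $n,t$ and $\sigma_u=\frac{\Delta s\sqrt{2TN\ln(1/\delta)}}{\epsilon N}$, and updates its personalized model $\tilde{\boldsymbol{\varpi}}_n^{t+1}=\tilde{\boldsymbol{\varpi}}_n^t-\eta_{\mathrm{L}}\big((1-\frac{\lambda}{2})\nabla F_n(\tilde{\boldsymbol{\varpi}}_n^t)+\lambda(\tilde{\boldsymbol{\varpi}}_n^t-\tilde{\boldsymbol{\omega}}^t)\big)$; the server sets $\tilde{\boldsymbol{\omega}}^{t+1}=\frac1N\sum_n\tilde{\boldsymbol{u}}_n^{t+1}$. Expectations are over the DP noise. *)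

theory Defs
  imports "HOL-Analysis.Analysis" "HOL-Probability.Probability"
begin

definition strongly_convex :: "real \<Rightarrow> ('v::real_inner \<Rightarrow> real) \<Rightarrow> bool" where
  "strongly_convex mu f \<longleftrightarrow> convex_on UNIV (\<lambda>x. f x - mu / 2 * (norm x)\<^sup>2)"

definition clip :: "real \<Rightarrow> 'v::real_normed_vector \<Rightarrow> 'v" where
  "clip C u = (1 / max 1 (norm u / C)) *\<^sub>R u"

text \<open>Noisy global model of DP-Ditto. gF n is the gradient of F_n; z n t is the noise
  added by client n in round t (t = 1..T).\<close>
primrec glob :: "(nat \<Rightarrow> 'v \<Rightarrow> 'v) \<Rightarrow> nat \<Rightarrow> real \<Rightarrow> real \<Rightarrow> 'v
    \<Rightarrow> (nat \<Rightarrow> nat \<Rightarrow> 'a \<Rightarrow> 'v::euclidean_space) \<Rightarrow> nat \<Rightarrow> 'a \<Rightarrow> 'v" where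
  "glob gF N C etaG w0 z 0 = (\<lambda>x. w0)"
| "glob gF N C etaG w0 z (Suc t) = (\<lambda>x. (1 / real N) *\<^sub>R
     (\<Sum>n<N. clip C (glob gF N C etaG w0 z t x - etaG *\<^sub>R gF n (glob gF N C etaG w0 z t x))
              + z n (Suc t) x))"

primrec pers :: "(nat \<Rightarrow> 'v \<Rightarrow> 'v) \<Rightarrow> nat \<Rightarrow> real \<Rightarrow> real \<Rightarrow> 'v
    \<Rightarrow> (nat \<Rightarrow> nat \<Rightarrow> 'a \<Rightarrow> 'v::euclidean_space) \<Rightarrow> real \<Rightarrow> real \<Rightarrow> (nat \<Rightarrow> 'v)
    \<Rightarrow> nat \<Rightarrow> nat \<Rightarrow> 'a \<Rightarrow> 'v" where
  "pers gF N C etaG w0 z etaL lam p0 n 0 = (\<lambda>x. p0 n)"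
| "pers gF N C etaG w0 z etaL lam p0 n (Suc t) = (\<lambda>x.
     pers gF N C etaG w0 z etaL lam p0 n t x
     - etaL *\<^sub>R ((1 - lam / 2) *\<^sub>R gF n (pers gF N C etaG w0 z etaL lam p0 n t x)
                 + lam *\<^sub>R (pers gF N C etaG w0 z etaL lam p0 n t x - glob gF N C etaG w0 z t x)))"

end

theory Submission
  imports Defs
begin


lemma sc_fo:
  fixes f :: "'v::euclidean_space \<Rightarrow> real"
  assumes sc: "strongly_convex mu f" and d: "\<And>w. (f has_derivative (\<lambda>h. g w \<bullet> h)) (at w)"
  shows "f x + g x \<bullet> (y - x) + mu/2 * (norm (y-x))\<^sup>2 \<le> f y"
proof -
  define h where "h = (\<lambda>z. f z - mu/2 * (norm z)\<^sup>2)"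
  define v where "v = y - x"
  define \<phi> where "\<phi> = (\<lambda>t::real. h (x + t *\<^sub>R v))"
  have ch: "convex_on UNIV h" using sc unfolding strongly_convex_def h_def by simp
  have cvx: "convex_on UNIV \<phi>"
  proof (rule convex_onI)
    fix u s t :: real assume "0 < u" "u < 1"
    have e: "x + ((1 - u) * s + u * t) *\<^sub>R v = (1 - u) *\<^sub>R (x + s *\<^sub>R v) + u *\<^sub>R (x + t *\<^sub>R v)"
      by (simp add: algebra_simps)
    show "\<phi> ((1 - u) *\<^sub>R s + u *\<^sub>R t) \<le> (1 - u) * \<phi> s + u * \<phi> t"
      unfolding \<phi>_def scaleR_conv_of_real of_real_def[symmetric] using e using convex_onD[OF ch, of u "x + s *\<^sub>R v" "x + t *\<^sub>R v"] \<open>0<u\<close> \<open>u<1\<close>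
      by simp
  qed auto
  have d1: "((\<lambda>t::real. x + t *\<^sub>R v) has_derivative (\<lambda>t. t *\<^sub>R v)) (at 0)"
    by (auto intro!: derivative_eq_intros)
  have d2: "((\<lambda>t::real. f (x + t *\<^sub>R v)) has_derivative (\<lambda>t. g x \<bullet> (t *\<^sub>R v))) (at 0)"
    using has_derivative_compose[OF d1, of f "\<lambda>h. g x \<bullet> h"] d[of x] by simp
  have d3: "((\<lambda>t::real. (x + t *\<^sub>R v) \<bullet> (x + t *\<^sub>R v)) has_derivative
        (\<lambda>t. (x + 0 *\<^sub>R v) \<bullet> (t *\<^sub>R v) + (t *\<^sub>R v) \<bullet> (x + 0 *\<^sub>R v))) (at 0)"
    by (rule has_derivative_inner[OF d1 d1])
  have n2: "\<And>z::'v. (norm z)\<^sup>2 = z \<bullet> z" by (simp add: power2_norm_eq_inner)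
  have "(\<phi> has_derivative (\<lambda>t. g x \<bullet> (t *\<^sub>R v) - mu/2 * ((x + 0 *\<^sub>R v) \<bullet> (t *\<^sub>R v) + (t *\<^sub>R v) \<bullet> (x + 0 *\<^sub>R v)))) (at 0)"
    unfolding \<phi>_def h_def n2 by (intro has_derivative_diff d2 has_derivative_mult_right d3)
  then have "(\<phi> has_real_derivative (g x \<bullet> v - mu * (x \<bullet> v))) (at 0)"
    unfolding has_field_derivative_def
    by (rule has_derivative_eq_rhs) (auto simp: fun_eq_iff algebra_simps inner_commute)
  then have "\<phi> 1 - \<phi> 0 \<ge> (g x \<bullet> v - mu * (x \<bullet> v)) * (1 - 0)"
    by (intro convex_on_imp_above_tangent[OF cvx]) auto
  moreover have "(norm y)\<^sup>2 = (norm x)\<^sup>2 + 2 * (x \<bullet> v) + (norm v)\<^sup>2"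
    unfolding v_def n2 by (simp add: algebra_simps inner_commute)
  ultimately show ?thesis unfolding \<phi>_def h_def v_def[symmetric] by (simp add: v_def algebra_simps)
qed


lemma nds: "(norm (x - y))\<^sup>2 = (norm x)\<^sup>2 - 2 * (x \<bullet> y) + (norm (y::'v::real_inner))\<^sup>2"
  by (simp add: power2_norm_eq_inner inner_diff_left inner_diff_right inner_commute)

lemma alg1: "a * ((1 - a) * nd + 2 * dv + l2 * F2) + ((1 + l2) * Phi + 2 * l2 * F2 - nv)
   = a * nd + (a+2) * l2 * F2 + (1 + l2) * Phi - (a\<^sup>2 * nd - 2 * a * dv + nv)" for a nd dv l2 F2 Phi nv :: real
  by (simp add: algebra_simps power2_eq_square)

lemma core:
  fixes w g ps us ws X Y Z :: "'v::real_inner"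
  fixes k lam mu eta a Mb dF :: real
  assumes k: "k = 1 - lam/2" and a: "a = k*mu + lam" and lam: "0 \<le> lam" "lam \<le> 2"
    and mu: "mu > 0" and eta: "eta > 0" and apos: "a > 0" and Mb: "0 \<le> Mb"
    and h1: "mu * (norm (w - us))\<^sup>2 \<le> X \<bullet> (w - us)"
    and h2: "norm (w - us) \<le> norm X / mu"
    and h3: "norm (g - us) \<le> norm Y / mu"
    and h4: "norm ((w - eta *\<^sub>R (k *\<^sub>R X + lam *\<^sub>R (w - g))) - us) \<le> norm Z / mu"
    and h5: "a * (norm (w - ps))\<^sup>2 \<le> (w - ps) \<bullet> (k *\<^sub>R X + lam *\<^sub>R (w - ws))"
    and h6: "a * norm (ps - us) \<le> lam * Mb"
    and h7: "(norm (g - ws))\<^sup>2 \<le> 2/mu * dF"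
  shows "(norm (w - eta *\<^sub>R (k *\<^sub>R X + lam *\<^sub>R (w - g)) - ps))\<^sup>2 \<le> (1 - eta*a + eta) * (norm (w-ps))\<^sup>2
     + (eta\<^sup>2 + eta\<^sup>2*lam\<^sup>2) * (if 1 \<le> eta*a then (1 - 1/(eta*a)\<^sup>2) * ((a/mu) * norm X + lam*Mb)\<^sup>2
             + 1/(eta*a)\<^sup>2 * ((a/mu)*norm Z + lam*Mb)\<^sup>2
           else (k * norm X + lam/mu * norm Y + lam*Mb)\<^sup>2)
     + (4*eta\<^sup>2*lam\<^sup>2 + 2*eta*lam\<^sup>2)/mu * dF"
proof -
  define V where "V = k *\<^sub>R X + lam *\<^sub>R (w - g)"
  define D where "D = w - ps"
  define B where "B = g - ws"
  define r where "r = norm (ps - us)"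
  have k0: "k \<ge> 0" using k lam by simp
  have dF0: "dF \<ge> 0"
  proof -
    have "0 \<le> 2/mu * dF" using h7 order_trans zero_le_power2 by blast
    then show ?thesis using mu by (simp add: zero_le_divide_iff)
  qed
  have lhs: "w - eta *\<^sub>R (k *\<^sub>R X + lam *\<^sub>R (w - g)) - ps = D - eta *\<^sub>R V"
    unfolding D_def V_def by (simp add: algebra_simps)
  show ?thesis
  proof (cases "1 \<le> eta * a")
    case True
    define x where "x = norm X / mu"
    define z where "z = norm Z / mu"
    define th where "th = 1 - 1/(eta*a)\<^sup>2"
    have x0: "x \<ge> 0" "z \<ge> 0" "r \<ge> 0" using mu by (auto simp: x_def z_def r_def)
    have ea: "(eta*a)\<^sup>2 \<ge> 1" using True by (simp add: one_le_power)
    have th01: "0 \<le> th" "th \<le> 1" unfolding th_def using ea by (auto simp: field_simps)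
    have r1: "a * r \<le> lam * Mb" using h6 r_def by simp
    have Psi: "(norm (D - eta *\<^sub>R V))\<^sup>2 \<le> (z + r)\<^sup>2"
    proof -
      have "norm (D - eta *\<^sub>R V) = norm ((w - eta *\<^sub>R (k *\<^sub>R X + lam *\<^sub>R (w - g)) - us) + (us - ps))"
        unfolding lhs[symmetric] by simp
      also have "\<dots> \<le> norm (w - eta *\<^sub>R (k *\<^sub>R X + lam *\<^sub>R (w - g)) - us) + norm (us - ps)"
        by (rule norm_triangle_ineq)
      also have "\<dots> \<le> z + r" using h4 unfolding z_def r_def by (simp add: norm_minus_commute)
      finally show ?thesis by (intro power_mono) auto
    qed
    have Dle: "(norm D)\<^sup>2 \<le> (x + r)\<^sup>2"
    proof -
      have "norm D = norm ((w - us) + (us - ps))" unfolding D_def by simp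
      also have "\<dots> \<le> norm (w - us) + norm (us - ps)" by (rule norm_triangle_ineq)
      also have "\<dots> \<le> x + r" using h2 unfolding x_def r_def by (simp add: norm_minus_commute)
      finally show ?thesis by (intro power_mono) auto
    qed
    have sX: "((a/mu) * norm X + lam*Mb)\<^sup>2 \<ge> a\<^sup>2 * (x + r)\<^sup>2"
    proof -
      have "a * (x + r) \<le> (a/mu) * norm X + lam*Mb" using r1 unfolding x_def by (simp add: algebra_simps)
      moreover have "0 \<le> a * (x + r)" using apos x0 by simp
      ultimately show ?thesis by (metis power_mono power_mult_distrib)
    qed
    have sZ: "((a/mu) * norm Z + lam*Mb)\<^sup>2 \<ge> a\<^sup>2 * (z + r)\<^sup>2"
    proof -
      have "a * (z + r) \<le> (a/mu) * norm Z + lam*Mb" using r1 unfolding z_def by (simp add: algebra_simps)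
      moreover have "0 \<le> a * (z + r)" using apos x0 by simp
      ultimately show ?thesis by (metis power_mono power_mult_distrib)
    qed
    define Phi where "Phi = th * ((a/mu) * norm X + lam*Mb)\<^sup>2 + 1/(eta*a)\<^sup>2 * ((a/mu)*norm Z + lam*Mb)\<^sup>2"
    have Phi_ge: "Phi \<ge> th * a\<^sup>2 * (x + r)\<^sup>2 + 1/(eta*a)\<^sup>2 * a\<^sup>2 * (z + r)\<^sup>2"
    proof -
      have "th * (a\<^sup>2 * (x + r)\<^sup>2) \<le> th * ((a/mu) * norm X + lam*Mb)\<^sup>2"
        using mult_left_mono[OF sX th01(1)] .
      moreover have "1/(eta*a)\<^sup>2 * (a\<^sup>2 * (z + r)\<^sup>2) \<le> 1/(eta*a)\<^sup>2 * ((a/mu) * norm Z + lam*Mb)\<^sup>2"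
        using mult_left_mono[OF sZ, of "1/(eta*a)\<^sup>2"] by simp
      ultimately show ?thesis unfolding Phi_def by (simp add: mult.assoc)
    qed
    have Phi0: "Phi \<ge> 0" unfolding Phi_def using th01 by simp
    have e1: "eta\<^sup>2 * (1/(eta*a)\<^sup>2 * a\<^sup>2 * (z + r)\<^sup>2) = (z + r)\<^sup>2"
      using eta apos by (simp add: field_simps power2_eq_square)
    have e2: "eta\<^sup>2 * (th * a\<^sup>2 * (x + r)\<^sup>2) = ((eta*a)\<^sup>2 - 1) * (x + r)\<^sup>2"
      using eta apos unfolding th_def by (simp add: field_simps power2_eq_square)
    have key: "0 \<le> (1 - eta*a + eta) * (norm D)\<^sup>2 + ((eta*a)\<^sup>2 - 1) * (x + r)\<^sup>2"
    proof (cases "1 - eta*a + eta \<ge> 0")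
      case True
      then show ?thesis using ea by simp
    next
      case False
      have "(1 - eta*a + eta) * (norm D)\<^sup>2 \<ge> (1 - eta*a + eta) * (x + r)\<^sup>2"
        using False Dle by (intro mult_left_mono_neg) auto
      moreover have "(1 - eta*a + eta) + ((eta*a)\<^sup>2 - 1) \<ge> 0"
      proof -
        have "(1 - eta*a + eta) + ((eta*a)\<^sup>2 - 1) = eta*a*(eta*a - 1) + eta" by (simp add: power2_eq_square algebra_simps)
        also have "\<dots> \<ge> 0" using True eta apos by simp
        finally show ?thesis .
      qed
      ultimately show ?thesis by (smt (verit) zero_le_power2 mult_right_mono distrib_right)
    qed
    have "eta\<^sup>2 * Phi \<le> (eta\<^sup>2 + eta\<^sup>2*lam\<^sup>2) * Phi" using Phi0 by (simp add: algebra_simps)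
    moreover have "eta\<^sup>2 * Phi \<ge> ((eta*a)\<^sup>2 - 1) * (x + r)\<^sup>2 + (z + r)\<^sup>2"
      using mult_left_mono[OF Phi_ge, of "eta\<^sup>2"] e1 e2 by (simp add: distrib_left)
    moreover have "0 \<le> (4*eta\<^sup>2*lam\<^sup>2 + 2*eta*lam\<^sup>2)/mu * dF" using eta mu dF0 by simp
    ultimately show ?thesis using True Psi key unfolding lhs Phi_def th_def D_def[symmetric] by simp
  next
    case False
    define Phi where "Phi = (k * norm X + lam/mu * norm Y + lam*Mb)\<^sup>2"
    define F2 where "F2 = 2/mu * dF"
    have BF: "(norm B)\<^sup>2 \<le> F2" using h7 unfolding B_def F2_def .
    have Psi: "(norm (D - eta *\<^sub>R V))\<^sup>2 = (norm D)\<^sup>2 - 2*eta*(D \<bullet> V) + eta\<^sup>2 * (norm V)\<^sup>2"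
      by (simp add: nds power_mult_distrib)
    define l where "l = (1 - a) * (norm D)\<^sup>2 + 2 * (D \<bullet> V) + lam\<^sup>2 * F2"
    define q where "q = (1 + lam\<^sup>2) * Phi + 2 * lam\<^sup>2 * F2 - (norm V)\<^sup>2"
    have diff: "(1 - eta*a + eta) * (norm D)\<^sup>2 + (eta\<^sup>2 + eta\<^sup>2*lam\<^sup>2) * Phi + (4*eta\<^sup>2*lam\<^sup>2 + 2*eta*lam\<^sup>2)/mu * dF
        - (norm (D - eta *\<^sub>R V))\<^sup>2 = eta * l + eta\<^sup>2 * q"
    proof -
      have "(4*eta\<^sup>2*lam\<^sup>2 + 2*eta*lam\<^sup>2)/mu * dF = (2*eta\<^sup>2*lam\<^sup>2 + eta*lam\<^sup>2) * F2"
        unfolding F2_def by (simp add: divide_simps)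
      then show ?thesis unfolding Psi l_def q_def by (simp add: algebra_simps power2_eq_square)
    qed
    have VAB: "V = (k *\<^sub>R X + lam *\<^sub>R (w - ws)) - lam *\<^sub>R B" unfolding V_def B_def by (simp add: algebra_simps)
    have DB: "2 * lam * (D \<bullet> B) \<le> (norm D)\<^sup>2 + lam\<^sup>2 * (norm B)\<^sup>2"
    proof -
      have "0 \<le> (norm (D - lam *\<^sub>R B))\<^sup>2" by simp
      then show ?thesis by (simp add: nds power_mult_distrib)
    qed
    have l0: "l \<ge> a * (norm D)\<^sup>2"
    proof -
      have "D \<bullet> V = D \<bullet> (k *\<^sub>R X + lam *\<^sub>R (w - ws)) - lam * (D \<bullet> B)"
        unfolding VAB by (simp add: inner_diff_right)
      moreover have "a * (norm D)\<^sup>2 \<le> D \<bullet> (k *\<^sub>R X + lam *\<^sub>R (w - ws))" using h5 D_def by simp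
      moreover have "lam\<^sup>2 * (norm B)\<^sup>2 \<le> lam\<^sup>2 * F2" using BF by (simp add: mult_left_mono)
      ultimately show ?thesis unfolding l_def using DB by (simp add: algebra_simps)
    qed
    have aDV: "a *\<^sub>R D - V = lam *\<^sub>R (g - us) - a *\<^sub>R (ps - us) - k *\<^sub>R (X - mu *\<^sub>R (w - us))"
      unfolding D_def V_def a by (simp add: algebra_simps)
    have RX: "norm (X - mu *\<^sub>R (w - us)) \<le> norm X"
    proof -
      have "(norm (X - mu *\<^sub>R (w - us)))\<^sup>2 = (norm X)\<^sup>2 - 2 * mu * (X \<bullet> (w - us)) + mu\<^sup>2 * (norm (w - us))\<^sup>2"
        by (simp add: nds power_mult_distrib)
      also have "\<dots> \<le> (norm X)\<^sup>2 - mu\<^sup>2 * (norm (w - us))\<^sup>2"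
        using mult_left_mono[OF h1, of mu] mu by (simp add: power2_eq_square algebra_simps)
      also have "\<dots> \<le> (norm X)\<^sup>2" by simp
      finally show ?thesis using power2_le_imp_le by fastforce
    qed
    have nV: "norm (a *\<^sub>R D - V) \<le> k * norm X + lam/mu * norm Y + lam*Mb"
    proof -
      have "norm (a *\<^sub>R D - V) \<le> norm (lam *\<^sub>R (g - us)) + norm (a *\<^sub>R (ps - us)) + norm (k *\<^sub>R (X - mu *\<^sub>R (w - us)))"
        unfolding aDV by (rule order_trans[OF norm_triangle_ineq4 add_right_mono[OF norm_triangle_ineq4]])
      also have "\<dots> = lam * norm (g - us) + a * norm (ps - us) + k * norm (X - mu *\<^sub>R (w - us))"
        using lam apos k0 by simp
      also have "\<dots> \<le> lam * (norm Y / mu) + lam * Mb + k * norm X"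
        using mult_left_mono[OF h3 lam(1)] h6 mult_left_mono[OF RX k0] by linarith
      finally show ?thesis by simp
    qed
    have nV2: "(norm (a *\<^sub>R D - V))\<^sup>2 \<le> Phi" unfolding Phi_def by (rule power_mono[OF nV]) simp
    have alq: "a * l + q \<ge> 0"
    proof -
      have n: "(norm (a *\<^sub>R D - V))\<^sup>2 = a\<^sup>2 * (norm D)\<^sup>2 - 2 * a * (D \<bullet> V) + (norm V)\<^sup>2"
      proof -
        have "(norm (a *\<^sub>R D - V))\<^sup>2 = (norm (a *\<^sub>R D))\<^sup>2 - 2 * ((a *\<^sub>R D) \<bullet> V) + (norm V)\<^sup>2"
          by (rule nds)
        moreover have "(norm (a *\<^sub>R D))\<^sup>2 = a\<^sup>2 * (norm D)\<^sup>2" by (simp add: power_mult_distrib)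
        moreover have "(a *\<^sub>R D) \<bullet> V = a * (D \<bullet> V)" by simp
        ultimately show ?thesis by simp
      qed
      have "a * l + q = a * (norm D)\<^sup>2 + (a+2) * lam\<^sup>2 * F2 + (1 + lam\<^sup>2) * Phi - (norm (a *\<^sub>R D - V))\<^sup>2"
        unfolding l_def q_def n by (rule alg1)
      moreover have F20: "F2 \<ge> 0" using BF order_trans zero_le_power2 by blast
      moreover have "Phi \<ge> 0" unfolding Phi_def by simp
      moreover have "a * (norm D)\<^sup>2 \<ge> 0" using apos by simp
      moreover have "(a+2) * lam\<^sup>2 * F2 \<ge> 0" using apos F20 by simp
      moreover have "(1 + lam\<^sup>2) * Phi \<ge> Phi" using \<open>Phi \<ge> 0\<close> by (simp add: algebra_simps)
      ultimately show ?thesis using nV2 by linarith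
    qed
    have "eta * l + eta\<^sup>2 * q \<ge> 0"
    proof (cases "q \<ge> 0")
      case True
      have "eta * l \<ge> 0" using l0 eta apos by (smt (verit) mult_nonneg_nonneg zero_le_power2)
      moreover have "eta\<^sup>2 * q \<ge> 0" using True by simp
      ultimately show ?thesis by linarith
    next
      case qn: False
      have "eta * a < 1" using False by simp
      then have "eta < 1 / a" using apos by (simp add: field_simps)
      then have "eta * q \<ge> (1/a) * q" using qn by (intro mult_right_mono_neg) auto
      then have "eta * q \<ge> q / a" by simp
      then have "l + eta * q \<ge> (a * l + q) / a" using apos by (simp add: field_simps)
      moreover have "(a * l + q) / a \<ge> 0" using alq apos by simp
      ultimately have "l + eta * q \<ge> 0" by linarith
      then have "eta * (l + eta * q) \<ge> 0" using eta by simp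
      then show ?thesis by (simp add: power2_eq_square algebra_simps)
    qed
    then show ?thesis using diff False unfolding lhs Phi_def D_def[symmetric] by simp
  qed
qed

lemma grad_zero:
  fixes f :: "'v::euclidean_space \<Rightarrow> real"
  assumes "(f has_derivative (\<lambda>h. G \<bullet> h)) (at x)" "\<And>y. f x \<le> f y"
  shows "G = 0"
proof -
  have "(\<lambda>h. G \<bullet> h) = (\<lambda>v. 0)" by (rule differential_zero_maxmin[of x UNIV]) (use assms in auto)
  then have "G \<bullet> G = 0" by metis
  then show ?thesis by simp
qed

lemma sc_mono:
  fixes f :: "'v::euclidean_space \<Rightarrow> real"
  assumes sc: "strongly_convex mu f" and d: "\<And>w. (f has_derivative (\<lambda>h. g w \<bullet> h)) (at w)"
  shows "mu * (norm (x - y))\<^sup>2 \<le> (g x - g y) \<bullet> (x - y)"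
proof -
  have 1: "f x + g x \<bullet> (y - x) + mu/2 * (norm (y-x))\<^sup>2 \<le> f y" by (rule sc_fo[OF sc d])
  have 2: "f y + g y \<bullet> (x - y) + mu/2 * (norm (x-y))\<^sup>2 \<le> f x" by (rule sc_fo[OF sc d])
  have e: "(g x - g y) \<bullet> (x - y) = - (g x \<bullet> (y - x)) - g y \<bullet> (x - y)"
    by (simp add: inner_diff_left inner_diff_right)
  have "norm (y - x) = norm (x - y)" by (rule norm_minus_commute)
  then show ?thesis using 1 2 e by simp
qed

lemma pstar_grad:
  fixes f :: "'v::euclidean_space \<Rightarrow> real"
  assumes d: "(f has_derivative (\<lambda>h. G \<bullet> h)) (at p)"
    and min: "\<And>q. k * f p + lam/2 * (norm (p - ws))\<^sup>2 \<le> k * f q + lam/2 * (norm (q - ws))\<^sup>2"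
  shows "k *\<^sub>R G + lam *\<^sub>R (p - ws) = 0"
proof -
  have n2: "\<And>z::'v. (norm z)\<^sup>2 = z \<bullet> z" by (simp add: power2_norm_eq_inner)
  have "((\<lambda>q. k * f q + lam/2 * ((q - ws) \<bullet> (q - ws))) has_derivative
      (\<lambda>h. k * (G \<bullet> h) + lam/2 * ((p - ws) \<bullet> h + h \<bullet> (p - ws)))) (at p)"
    by (auto intro!: derivative_eq_intros d)
  then have "((\<lambda>q. k * f q + lam/2 * (norm (q - ws))\<^sup>2) has_derivative
      (\<lambda>h. (k *\<^sub>R G + lam *\<^sub>R (p - ws)) \<bullet> h)) (at p)"
    unfolding n2 by (rule has_derivative_eq_rhs) (auto simp: fun_eq_iff algebra_simps inner_commute)
  then show ?thesis by (rule grad_zero) (use min in auto)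
qed

lemma wstar_grad:
  fixes Fs :: "nat \<Rightarrow> 'v::euclidean_space \<Rightarrow> real"
  assumes d: "\<And>m. m < N \<Longrightarrow> (Fs m has_derivative (\<lambda>h. gF m ws \<bullet> h)) (at ws)"
    and min: "\<And>w. (\<Sum>m<N. Fs m ws) / real N \<le> (\<Sum>m<N. Fs m w) / real N"
    and N: "N \<ge> 1"
  shows "(\<Sum>m<N. gF m ws) = 0"
proof -
  have "((\<lambda>w. (\<Sum>m<N. Fs m w) / real N) has_derivative (\<lambda>h. (\<Sum>m<N. gF m ws \<bullet> h) / real N)) (at ws)"
    by (intro bounded_linear.has_derivative[OF bounded_linear_divide] has_derivative_sum d) auto
  then have "((\<lambda>w. (\<Sum>m<N. Fs m w) / real N) has_derivative (\<lambda>h. ((1 / real N) *\<^sub>R (\<Sum>m<N. gF m ws)) \<bullet> h)) (at ws)"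
    by (rule has_derivative_eq_rhs) (auto simp: fun_eq_iff inner_sum_left)
  then have "(1 / real N) *\<^sub>R (\<Sum>m<N. gF m ws) = 0" by (rule grad_zero) (use min in auto)
  then show ?thesis using N by simp
qed

lemma int_sq_bound:
  fixes f h :: "'a \<Rightarrow> real"
  assumes P: "prob_space M" and fm: "f \<in> borel_measurable M" and hm: "h \<in> borel_measurable M"
    and ih: "integrable M (\<lambda>x. (h x)\<^sup>2)"
    and b: "\<And>x. x \<in> space M \<Longrightarrow> 0 \<le> f x \<and> f x \<le> \<alpha> * h x + \<beta>"
    and h0: "\<And>x. 0 \<le> h x" and ab: "0 \<le> \<alpha>" "0 \<le> \<beta>"
  shows "integrable M (\<lambda>x. (f x)\<^sup>2)"
proof -
  interpret prob_space M by (rule P)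
  show ?thesis
  proof (rule Bochner_Integration.integrable_bound[of _ "\<lambda>x. 2 * \<alpha>\<^sup>2 * (h x)\<^sup>2 + 2 * \<beta>\<^sup>2"])
    show "integrable M (\<lambda>x. 2 * \<alpha>\<^sup>2 * (h x)\<^sup>2 + 2 * \<beta>\<^sup>2)" using ih by simp
    show "(\<lambda>x. (f x)\<^sup>2) \<in> borel_measurable M" using fm by measurable
    show "AE x in M. norm ((f x)\<^sup>2) \<le> norm (2 * \<alpha>\<^sup>2 * (h x)\<^sup>2 + 2 * \<beta>\<^sup>2)"
    proof (rule AE_I2)
      fix x assume x: "x \<in> space M"
      have f0: "0 \<le> f x" and fl: "f x \<le> \<alpha> * h x + \<beta>" using b[OF x] by auto
      have "(f x)\<^sup>2 \<le> (\<alpha> * h x + \<beta>)\<^sup>2" using power_mono[OF fl f0, of 2] .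
      also have "\<dots> \<le> 2 * \<alpha>\<^sup>2 * (h x)\<^sup>2 + 2 * \<beta>\<^sup>2"
      proof -
        have "0 \<le> (\<alpha> * h x - \<beta>)\<^sup>2" by simp
        then show ?thesis by (simp add: power2_eq_square algebra_simps)
      qed
      finally show "norm ((f x)\<^sup>2) \<le> norm (2 * \<alpha>\<^sup>2 * (h x)\<^sup>2 + 2 * \<beta>\<^sup>2)" by simp
    qed
  qed
qed

lemma exp_sq:
  fixes M :: "'a measure" and p q :: "'a \<Rightarrow> real"
  assumes P: "prob_space M" and pm: "p \<in> borel_measurable M" and qm: "q \<in> borel_measurable M"
    and p0: "\<And>x. 0 \<le> p x" and q0: "\<And>x. 0 \<le> q x"
    and ip: "integrable M (\<lambda>x. (p x)\<^sup>2)" and iq: "integrable M (\<lambda>x. (q x)\<^sup>2)"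
    and Ep: "prob_space.expectation M (\<lambda>x. (p x)\<^sup>2) \<le> \<gamma>\<^sup>2"
    and Eq: "prob_space.expectation M (\<lambda>x. (q x)\<^sup>2) \<le> \<gamma>\<^sup>2"
    and \<gamma>: "0 \<le> \<gamma>" and c: "0 \<le> c1" "0 \<le> c2" "0 \<le> d"
  shows "integrable M (\<lambda>x. (c1 * p x + c2 * q x + d)\<^sup>2) \<and>
    prob_space.expectation M (\<lambda>x. (c1 * p x + c2 * q x + d)\<^sup>2) \<le> ((c1 + c2) * \<gamma> + d)\<^sup>2"
proof -
  interpret prob_space M by (rule P)
  have ip1: "integrable M p" by (rule square_integrable_imp_integrable[OF pm ip])
  have iq1: "integrable M q" by (rule square_integrable_imp_integrable[OF qm iq])
  have ipq: "integrable M (\<lambda>x. p x * q x)"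
  proof (rule Bochner_Integration.integrable_bound[of _ "\<lambda>x. (p x)\<^sup>2 + (q x)\<^sup>2"])
    show "integrable M (\<lambda>x. (p x)\<^sup>2 + (q x)\<^sup>2)" using ip iq by simp
    show "(\<lambda>x. p x * q x) \<in> borel_measurable M" using pm qm by measurable
    show "AE x in M. norm (p x * q x) \<le> norm ((p x)\<^sup>2 + (q x)\<^sup>2)"
    proof (rule AE_I2)
      fix x
      have "0 \<le> (p x - q x)\<^sup>2" by simp
      then have "2 * (p x * q x) \<le> (p x)\<^sup>2 + (q x)\<^sup>2" unfolding power2_diff by simp
      moreover have "0 \<le> p x * q x" using p0[of x] q0[of x] by simp
      ultimately have "p x * q x \<le> (p x)\<^sup>2 + (q x)\<^sup>2" by simp
      then show "norm (p x * q x) \<le> norm ((p x)\<^sup>2 + (q x)\<^sup>2)" using p0[of x] q0[of x] by simp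
    qed
  qed
  have eq: "(\<lambda>x. (c1 * p x + c2 * q x + d)\<^sup>2) = (\<lambda>x. c1\<^sup>2 * (p x)\<^sup>2 + c2\<^sup>2 * (q x)\<^sup>2
      + (2*c1*c2) * (p x * q x) + (2*c1*d) * p x + (2*c2*d) * q x + d\<^sup>2)"
    by (auto simp: fun_eq_iff power2_eq_square algebra_simps)
  have int: "integrable M (\<lambda>x. (c1 * p x + c2 * q x + d)\<^sup>2)"
    unfolding eq using ip iq ip1 iq1 ipq by simp
  have E: "expectation (\<lambda>x. (c1 * p x + c2 * q x + d)\<^sup>2) = c1\<^sup>2 * expectation (\<lambda>x. (p x)\<^sup>2)
     + c2\<^sup>2 * expectation (\<lambda>x. (q x)\<^sup>2) + (2*c1*c2) * expectation (\<lambda>x. p x * q x)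
     + (2*c1*d) * expectation p + (2*c2*d) * expectation q + d\<^sup>2"
  proof -
    have i: "integrable M (\<lambda>x. c1\<^sup>2 * (p x)\<^sup>2)" "integrable M (\<lambda>x. c2\<^sup>2 * (q x)\<^sup>2)"
      "integrable M (\<lambda>x. (2*c1*c2) * (p x * q x))" "integrable M (\<lambda>x. (2*c1*d) * p x)"
      "integrable M (\<lambda>x. (2*c2*d) * q x)" "integrable M (\<lambda>x. d\<^sup>2)"
      using ip iq ip1 iq1 ipq by auto
    let ?A1 = "\<lambda>x. c1\<^sup>2 * (p x)\<^sup>2" and ?A2 = "\<lambda>x. c2\<^sup>2 * (q x)\<^sup>2"
      and ?A3 = "\<lambda>x. (2*c1*c2) * (p x * q x)" and ?A4 = "\<lambda>x. (2*c1*d) * p x"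
      and ?A5 = "\<lambda>x. (2*c2*d) * q x" and ?A6 = "\<lambda>x::'a. d\<^sup>2"
    have e5: "expectation (\<lambda>x. ?A1 x + ?A2 x + ?A3 x + ?A4 x + ?A5 x + ?A6 x)
       = expectation (\<lambda>x. ?A1 x + ?A2 x + ?A3 x + ?A4 x + ?A5 x) + expectation ?A6"
      by (rule Bochner_Integration.integral_add) (use i in auto)
    have e4: "expectation (\<lambda>x. ?A1 x + ?A2 x + ?A3 x + ?A4 x + ?A5 x)
       = expectation (\<lambda>x. ?A1 x + ?A2 x + ?A3 x + ?A4 x) + expectation ?A5"
      by (rule Bochner_Integration.integral_add) (use i in auto)
    have e3: "expectation (\<lambda>x. ?A1 x + ?A2 x + ?A3 x + ?A4 x)
       = expectation (\<lambda>x. ?A1 x + ?A2 x + ?A3 x) + expectation ?A4"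
      by (rule Bochner_Integration.integral_add) (use i in auto)
    have e2: "expectation (\<lambda>x. ?A1 x + ?A2 x + ?A3 x)
       = expectation (\<lambda>x. ?A1 x + ?A2 x) + expectation ?A3"
      by (rule Bochner_Integration.integral_add) (use i in auto)
    have e1: "expectation (\<lambda>x. ?A1 x + ?A2 x) = expectation ?A1 + expectation ?A2"
      by (rule Bochner_Integration.integral_add) (use i in auto)
    show ?thesis unfolding eq e5 e4 e3 e2 e1 using prob_space by simp
  qed
  have Ep1: "expectation p \<le> \<gamma>"
  proof -
    have "(expectation p)\<^sup>2 \<le> expectation (\<lambda>x. (p x)\<^sup>2)"
      using variance_eq[OF ip1 ip] variance_positive[of p] by simp
    then have "(expectation p)\<^sup>2 \<le> \<gamma>\<^sup>2" using Ep by simp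
    then show ?thesis using \<gamma> by (rule power2_le_imp_le)
  qed
  have Eq1: "expectation q \<le> \<gamma>"
  proof -
    have "(expectation q)\<^sup>2 \<le> expectation (\<lambda>x. (q x)\<^sup>2)"
      using variance_eq[OF iq1 iq] variance_positive[of q] by simp
    then have "(expectation q)\<^sup>2 \<le> \<gamma>\<^sup>2" using Eq by simp
    then show ?thesis using \<gamma> by (rule power2_le_imp_le)
  qed
  have Epq: "expectation (\<lambda>x. p x * q x) \<le> \<gamma>\<^sup>2"
  proof -
    have "expectation (\<lambda>x. p x * q x) \<le> expectation (\<lambda>x. ((p x)\<^sup>2 + (q x)\<^sup>2) / 2)"
    proof (rule integral_mono)
      show "integrable M (\<lambda>x. ((p x)\<^sup>2 + (q x)\<^sup>2) / 2)" using ip iq by simp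
      fix x
      have "0 \<le> (p x - q x)\<^sup>2" by simp
      then show "p x * q x \<le> ((p x)\<^sup>2 + (q x)\<^sup>2) / 2" unfolding power2_diff by simp
    qed (rule ipq)
    also have "\<dots> = (expectation (\<lambda>x. (p x)\<^sup>2) + expectation (\<lambda>x. (q x)\<^sup>2)) / 2"
      using ip iq by simp
    also have "\<dots> \<le> \<gamma>\<^sup>2" using Ep Eq by simp
    finally show ?thesis .
  qed
  have "c1\<^sup>2 * expectation (\<lambda>x. (p x)\<^sup>2) \<le> c1\<^sup>2 * \<gamma>\<^sup>2" using Ep by (simp add: mult_left_mono)
  moreover have "c2\<^sup>2 * expectation (\<lambda>x. (q x)\<^sup>2) \<le> c2\<^sup>2 * \<gamma>\<^sup>2" using Eq by (simp add: mult_left_mono)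
  moreover have "(2*c1*c2) * expectation (\<lambda>x. p x * q x) \<le> (2*c1*c2) * \<gamma>\<^sup>2" using Epq c by (simp add: mult_left_mono)
  moreover have "(2*c1*d) * expectation p \<le> (2*c1*d) * \<gamma>" using Ep1 c by (simp add: mult_left_mono)
  moreover have "(2*c2*d) * expectation q \<le> (2*c2*d) * \<gamma>" using Eq1 c by (simp add: mult_left_mono)
  moreover have "((c1 + c2) * \<gamma> + d)\<^sup>2 = c1\<^sup>2 * \<gamma>\<^sup>2 + c2\<^sup>2 * \<gamma>\<^sup>2 + (2*c1*c2) * \<gamma>\<^sup>2 + (2*c1*d) * \<gamma> + (2*c2*d) * \<gamma> + d\<^sup>2"
    by (simp add: power2_eq_square algebra_simps)
  ultimately show ?thesis using int E by linarith
qed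




theorem lemma1:
  fixes M :: "'a measure"
    and Fs :: "nat \<Rightarrow> 'v::euclidean_space \<Rightarrow> real"
    and gF :: "nat \<Rightarrow> 'v \<Rightarrow> 'v"
    and z :: "nat \<Rightarrow> nat \<Rightarrow> 'a \<Rightarrow> 'v"
    and N T :: nat
    and mu L C etaG etaL lam eps delta \<Delta>s G0 Mb :: real
    and w0 wstar :: 'v and p0 ustar pstar :: "nat \<Rightarrow> 'v"
  assumes prob: "prob_space M"
    and N_pos: "N \<ge> 1"
    and C_pos: "C > 0" and etaG_pos: "etaG > 0" and etaL_pos: "etaL > 0"
    and lam_range: "0 \<le> lam" "lam \<le> 2"
    and eps_pos: "eps > 0" and delta_range: "0 < delta" "delta < 1"
    and \<Delta>s_pos: "\<Delta>s > 0"
    (* gradients *)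
    and grad: "\<And>n w. n < N \<Longrightarrow> (Fs n has_derivative (\<lambda>h. gF n w \<bullet> h)) (at w)"
    (* (i) strong convexity and L-smoothness of every F_n *)
    and mu_pos: "mu > 0" and L_pos: "L > 0"
    and sconv: "\<And>n. n < N \<Longrightarrow> strongly_convex mu (Fs n)"
    and smooth: "\<And>n w w'. n < N \<Longrightarrow> norm (gF n w - gF n w') \<le> L * norm (w - w')"
    (* (ii) *)
    and etaG_le: "etaG \<le> 2 / L"
    and mu_gt: "mu > (2 - 2 * lam) / (2 - lam)"
    (* minimizers *)
    and wstar_min: "\<And>w. (\<Sum>n<N. Fs n wstar) / real N \<le> (\<Sum>n<N. Fs n w) / real N"
    and ustar_min: "\<And>n u. n < N \<Longrightarrow> Fs n (ustar n) \<le> Fs n u"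
    and pstar_min: "\<And>n p. n < N \<Longrightarrow>
         (1 - lam / 2) * Fs n (pstar n) + lam / 2 * (norm (pstar n - wstar))\<^sup>2
       \<le> (1 - lam / 2) * Fs n p + lam / 2 * (norm (p - wstar))\<^sup>2"
    (* DP noise: i.i.d. N(0, sigma_u^2 I_d) over clients n < N and rounds 1..T *)
    and noise_gauss: "\<And>n t b. n < N \<Longrightarrow> t \<in> {1..T} \<Longrightarrow> b \<in> Basis \<Longrightarrow>
         distributed M lborel (\<lambda>x. z n t x \<bullet> b)
           (normal_density 0 (\<Delta>s * sqrt (2 * real T * real N * ln (1 / delta)) / (eps * real N)))"
    and noise_indep: "prob_space.indep_vars M (\<lambda>_. borel) (\<lambda>(n, t, b) x. z n t x \<bullet> b)
         ({..<N} \<times> {1..T} \<times> Basis)"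
    (* (iii) bounded expected squared gradient norms at the iterates *)
    and G0_nonneg: "G0 \<ge> 0"
    and grad_bd_glob: "\<And>n t. n < N \<Longrightarrow> t \<le> T \<Longrightarrow>
         integrable M (\<lambda>x. (norm (gF n (glob gF N C etaG w0 z t x)))\<^sup>2) \<and>
         prob_space.expectation M (\<lambda>x. (norm (gF n (glob gF N C etaG w0 z t x)))\<^sup>2) \<le> G0\<^sup>2"
    and grad_bd_pers: "\<And>n t. n < N \<Longrightarrow> t \<le> T \<Longrightarrow>
         integrable M (\<lambda>x. (norm (gF n (pers gF N C etaG w0 z etaL lam p0 n t x)))\<^sup>2) \<and>
         prob_space.expectation M (\<lambda>x. (norm (gF n (pers gF N C etaG w0 z etaL lam p0 n t x)))\<^sup>2)
           \<le> G0\<^sup>2"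
    (* (iv) *)
    and M_bd: "\<And>n. n < N \<Longrightarrow> norm (ustar n - wstar) \<le> Mb"
  shows "(\<forall>n<N. \<forall>t<T.
           prob_space.expectation M
             (\<lambda>x. (norm (pers gF N C etaG w0 z etaL lam p0 n (Suc t) x - pstar n))\<^sup>2)
         \<le> (1 - etaL * ((1 - lam / 2) * mu + lam) + etaL) *
             prob_space.expectation M
               (\<lambda>x. (norm (pers gF N C etaG w0 z etaL lam p0 n t x - pstar n))\<^sup>2)
           + (etaL\<^sup>2 + etaL\<^sup>2 * lam\<^sup>2) * ((1 - lam / 2) * G0 + lam * (G0 / mu + Mb))\<^sup>2
           + (4 * etaL\<^sup>2 * lam\<^sup>2 + 2 * etaL * lam\<^sup>2) / mu *
             prob_space.expectation M
               (\<lambda>x. (\<Sum>m<N. Fs m (glob gF N C etaG w0 z t x)) / real N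
                    - (\<Sum>m<N. Fs m wstar) / real N))
       \<and> (mu > 2 \<longrightarrow> strict_mono_on {0..2} (\<lambda>l. 1 - etaL * ((1 - l / 2) * mu + l) + etaL))"
proof -
  interpret P: prob_space M by (rule prob)
  define k where "k = 1 - lam / 2"
  define a where "a = k * mu + lam"
  have k0: "0 \<le> k" using lam_range unfolding k_def by simp
  have a1: "a > 1"
  proof (cases "lam = 2")
    case True then show ?thesis unfolding a_def k_def by simp
  next
    case False
    then have l2: "2 - lam > 0" using lam_range by simp
    have "(2 - 2 * lam) < mu * (2 - lam)" using mu_gt l2 by (simp add: pos_divide_less_eq)
    then show ?thesis unfolding a_def k_def by (simp add: algebra_simps)
  qed
  have apos: "a > 0" using a1 by simp
  have Mb0: "0 \<le> Mb" using M_bd[of 0] N_pos by (meson norm_ge_zero order_trans less_le_trans zero_less_one)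
  have contg: "continuous_on UNIV (gF n)" if "n < N" for n
  proof -
    have "L-lipschitz_on UNIV (gF n)"
      by (rule lipschitz_onI) (use smooth[OF that] L_pos in \<open>auto simp: dist_norm\<close>)
    then show ?thesis by (rule lipschitz_on_continuous_on)
  qed
  have measg: "gF n \<in> borel_measurable borel" if "n < N" for n
    using contg[OF that] by (rule borel_measurable_continuous_onI)
  have measF: "Fs n \<in> borel_measurable borel" if "n < N" for n
  proof -
    have "continuous_on UNIV (Fs n)"
      by (intro continuous_at_imp_continuous_on ballI has_derivative_continuous[OF grad[OF that]])
    then show ?thesis by (rule borel_measurable_continuous_onI)
  qed
  have clipm: "clip C \<in> borel_measurable (borel :: 'v measure)"
  proof -
    have "continuous_on UNIV (\<lambda>u::'v. (1 / max 1 (norm u / C)) *\<^sub>R u)"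
      by (intro continuous_intros) (use C_pos in auto)
    then show ?thesis unfolding clip_def[abs_def] by (rule borel_measurable_continuous_onI)
  qed
  have zm: "z n t \<in> borel_measurable M" if "n < N" "t \<in> {1..T}" for n t
  proof -
    have "\<forall>b\<in>Basis. (\<lambda>x. z n t x \<bullet> b) \<in> borel_measurable M"
      using distributed_measurable[OF noise_gauss[OF that]] by simp
    then show ?thesis by (simp add: borel_measurable_euclidean_space[of "z n t"])
  qed
  have globm: "glob gF N C etaG w0 z t \<in> borel_measurable M" if "t \<le> T" for t
    using that
  proof (induction t)
    case 0 then show ?case by simp
  next
    case (Suc t)
    then have IH: "glob gF N C etaG w0 z t \<in> borel_measurable M" by simp
    have "(\<lambda>x. clip C (glob gF N C etaG w0 z t x - etaG *\<^sub>R gF n (glob gF N C etaG w0 z t x))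
              + z n (Suc t) x) \<in> borel_measurable M" if "n \<in> {..<N}" for n
    proof -
      have gm: "(\<lambda>x. gF n (glob gF N C etaG w0 z t x)) \<in> borel_measurable M"
        using measurable_compose[OF IH measg] that by simp
      have "(\<lambda>x. glob gF N C etaG w0 z t x - etaG *\<^sub>R gF n (glob gF N C etaG w0 z t x)) \<in> borel_measurable M"
        using IH gm by measurable
      then have "(\<lambda>x. clip C (glob gF N C etaG w0 z t x - etaG *\<^sub>R gF n (glob gF N C etaG w0 z t x))) \<in> borel_measurable M"
        using measurable_compose clipm by blast
      moreover have "z n (Suc t) \<in> borel_measurable M" using zm that Suc.prems by simp
      ultimately show ?thesis by measurable
    qed
    then show ?case by simp measurable
  qed
  have persm: "pers gF N C etaG w0 z etaL lam p0 n t \<in> borel_measurable M" if "n < N" "t \<le> T" for n t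
    using that(2)
  proof (induction t)
    case 0 then show ?case by simp
  next
    case (Suc t)
    then have IH: "pers gF N C etaG w0 z etaL lam p0 n t \<in> borel_measurable M" by simp
    have gm: "(\<lambda>x. gF n (pers gF N C etaG w0 z etaL lam p0 n t x)) \<in> borel_measurable M"
      using measurable_compose[OF IH measg[OF that(1)]] by simp
    have gl: "glob gF N C etaG w0 z t \<in> borel_measurable M" using globm Suc.prems by simp
    show ?case using IH gm gl by simp measurable
  qed
  have gu: "gF m (ustar m) = 0" if "m < N" for m
    by (rule grad_zero[OF grad[OF that]]) (rule ustar_min[OF that])
  have h1g: "mu * (norm (w - ustar m))\<^sup>2 \<le> gF m w \<bullet> (w - ustar m)" if "m < N" for m w
    using sc_mono[OF sconv[OF that] grad[OF that], of w "ustar m"] gu[OF that] by simp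
  have h2g: "norm (w - ustar m) \<le> norm (gF m w) / mu" if "m < N" for m w
  proof (cases "norm (w - ustar m) = 0")
    case True then show ?thesis using mu_pos by simp
  next
    case False
    then have d0: "norm (w - ustar m) > 0" by simp
    have "mu * norm (w - ustar m) * norm (w - ustar m) \<le> norm (gF m w) * norm (w - ustar m)"
      using h1g[OF that, of w] norm_cauchy_schwarz[of "gF m w" "w - ustar m"]
      by (simp add: power2_eq_square mult.assoc)
    then have "mu * norm (w - ustar m) \<le> norm (gF m w)" using d0 by (rule mult_right_le_imp_le)
    then show ?thesis using mu_pos by (simp add: pos_le_divide_eq mult.commute)
  qed
  have sumws: "(\<Sum>m<N. gF m wstar) = 0"
    by (rule wstar_grad[where Fs = Fs]) (use grad wstar_min N_pos in auto)
  define dF where "dF = (\<lambda>v. (\<Sum>m<N. Fs m v) / real N - (\<Sum>m<N. Fs m wstar) / real N)"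
  have Npos: "real N > 0" using N_pos by simp
  have h7g: "(norm (v - wstar))\<^sup>2 \<le> 2 / mu * dF v" for v
  proof -
    have "(\<Sum>m<N. Fs m wstar + gF m wstar \<bullet> (v - wstar) + mu/2 * (norm (v - wstar))\<^sup>2) \<le> (\<Sum>m<N. Fs m v)"
      by (rule sum_mono) (use sc_fo[OF sconv grad] in simp)
    moreover have "(\<Sum>m<N. Fs m wstar + gF m wstar \<bullet> (v - wstar) + mu/2 * (norm (v - wstar))\<^sup>2)
        = (\<Sum>m<N. Fs m wstar) + (\<Sum>m<N. gF m wstar) \<bullet> (v - wstar) + real N * (mu/2 * (norm (v - wstar))\<^sup>2)"
      by (simp add: sum.distrib inner_sum_left)
    ultimately have "real N * (mu/2 * (norm (v - wstar))\<^sup>2) \<le> (\<Sum>m<N. Fs m v) - (\<Sum>m<N. Fs m wstar)"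
      using sumws by simp
    then have "mu/2 * (norm (v - wstar))\<^sup>2 \<le> dF v"
      unfolding dF_def using Npos by (simp add: diff_divide_distrib[symmetric] pos_le_divide_eq mult.commute)
    then show ?thesis using mu_pos by (simp add: field_simps)
  qed
  have dF0: "0 \<le> dF v" for v
  proof -
    have "0 \<le> 2 / mu * dF v" using h7g[of v] by (meson order_trans zero_le_power2)
    then show ?thesis using mu_pos by (simp add: zero_le_divide_iff)
  qed
  have dFup: "dF v \<le> (\<Sum>m<N. (1/mu + 1) * (norm (gF m v))\<^sup>2 + Mb\<^sup>2) / real N" for v
  proof -
    have "Fs m v - Fs m wstar \<le> (1/mu + 1) * (norm (gF m v))\<^sup>2 + Mb\<^sup>2" if m: "m < N" for m
    proof -
      have "Fs m v + gF m v \<bullet> (wstar - v) + mu/2 * (norm (wstar - v))\<^sup>2 \<le> Fs m wstar"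
        by (rule sc_fo[OF sconv[OF m] grad[OF m]])
      moreover have "0 \<le> mu/2 * (norm (wstar - v))\<^sup>2" using mu_pos by simp
      moreover have "gF m v \<bullet> (wstar - v) = - (gF m v \<bullet> (v - wstar))"
        by (simp add: inner_diff_right)
      ultimately have "Fs m v - Fs m wstar \<le> gF m v \<bullet> (v - wstar)" by linarith
      also have "\<dots> \<le> norm (gF m v) * norm (v - wstar)" by (rule norm_cauchy_schwarz)
      also have "\<dots> \<le> norm (gF m v) * (norm (gF m v) / mu + Mb)"
      proof (rule mult_left_mono)
        have "norm (v - wstar) \<le> norm (v - ustar m) + norm (ustar m - wstar)"
          using norm_triangle_ineq[of "v - ustar m" "ustar m - wstar"] by simp
        then show "norm (v - wstar) \<le> norm (gF m v) / mu + Mb" using h2g[OF m, of v] M_bd[OF m] by linarith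
      qed simp
      also have "\<dots> = (1/mu) * (norm (gF m v))\<^sup>2 + norm (gF m v) * Mb" by (simp add: power2_eq_square algebra_simps)
      also have "\<dots> \<le> (1/mu + 1) * (norm (gF m v))\<^sup>2 + Mb\<^sup>2"
      proof -
        have "0 \<le> (norm (gF m v) - Mb)\<^sup>2" by simp
        then have "2 * (norm (gF m v) * Mb) \<le> (norm (gF m v))\<^sup>2 + Mb\<^sup>2"
          unfolding power2_diff by (simp add: mult.assoc)
        moreover have "0 \<le> norm (gF m v) * Mb" using Mb0 by simp
        ultimately have "norm (gF m v) * Mb \<le> (norm (gF m v))\<^sup>2 + Mb\<^sup>2" by linarith
        then show ?thesis by (simp add: algebra_simps)
      qed
      finally show ?thesis .
    qed
    then have "(\<Sum>m<N. Fs m v - Fs m wstar) \<le> (\<Sum>m<N. (1/mu + 1) * (norm (gF m v))\<^sup>2 + Mb\<^sup>2)"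
      by (intro sum_mono) auto
    then show ?thesis unfolding dF_def using Npos
      by (simp add: diff_divide_distrib[symmetric] sum_subtractf divide_right_mono)
  qed
  show ?thesis
  proof (intro conjI allI impI)
    fix n t assume n: "n < N" and t: "t < T"
    define pe where "pe = pers gF N C etaG w0 z etaL lam p0 n"
    define gl where "gl = glob gF N C etaG w0 z"
    define ps where "ps = pstar n"
    define us where "us = ustar n"
    have psg: "k *\<^sub>R gF n ps + lam *\<^sub>R (ps - wstar) = 0"
      by (rule pstar_grad[OF grad[OF n]]) (use pstar_min[OF n] in \<open>simp add: k_def ps_def\<close>)
    have h5: "a * (norm (w - ps))\<^sup>2 \<le> (w - ps) \<bullet> (k *\<^sub>R gF n w + lam *\<^sub>R (w - wstar))" for w
    proof -
      have e: "k *\<^sub>R gF n w + lam *\<^sub>R (w - wstar) = k *\<^sub>R (gF n w - gF n ps) + lam *\<^sub>R (w - ps)"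
        using psg by (simp add: algebra_simps)
      have m: "mu * (norm (w - ps))\<^sup>2 \<le> (gF n w - gF n ps) \<bullet> (w - ps)"
        by (rule sc_mono[OF sconv[OF n] grad[OF n]])
      have "(w - ps) \<bullet> (k *\<^sub>R gF n w + lam *\<^sub>R (w - wstar)) = k * ((gF n w - gF n ps) \<bullet> (w - ps)) + lam * (norm (w - ps))\<^sup>2"
        unfolding e by (simp add: inner_add_right inner_commute power2_norm_eq_inner)
      moreover have "k * (mu * (norm (w - ps))\<^sup>2) \<le> k * ((gF n w - gF n ps) \<bullet> (w - ps))"
        using m k0 by (rule mult_left_mono)
      ultimately show ?thesis unfolding a_def by (simp add: algebra_simps)
    qed
    have h6: "a * norm (ps - us) \<le> lam * Mb"
    proof -
      define r where "r = norm (ps - us)"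
      have m1: "mu * r\<^sup>2 \<le> gF n ps \<bullet> (ps - us)" using h1g[OF n, of ps] unfolding r_def us_def .
      have kg: "k * (gF n ps \<bullet> (ps - us)) = - lam * ((ps - wstar) \<bullet> (ps - us))"
      proof -
        have "k *\<^sub>R gF n ps = - (lam *\<^sub>R (ps - wstar))" using psg by (simp add: eq_neg_iff_add_eq_0)
        then have "(k *\<^sub>R gF n ps) \<bullet> (ps - us) = (- (lam *\<^sub>R (ps - wstar))) \<bullet> (ps - us)" by simp
        then show ?thesis by simp
      qed
      have ip: "(ps - wstar) \<bullet> (ps - us) \<ge> r\<^sup>2 - Mb * r"
      proof -
        have "(ps - wstar) \<bullet> (ps - us) = (ps - us) \<bullet> (ps - us) + (us - wstar) \<bullet> (ps - us)"
          by (simp add: inner_diff_left inner_diff_right)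
        moreover have "(us - wstar) \<bullet> (ps - us) \<ge> - (Mb * r)"
        proof -
          have "\<bar>(us - wstar) \<bullet> (ps - us)\<bar> \<le> norm (us - wstar) * r"
            unfolding r_def by (rule Cauchy_Schwarz_ineq2)
          moreover have "norm (us - wstar) * r \<le> Mb * r"
            using M_bd[OF n] unfolding us_def r_def by (simp add: mult_right_mono)
          ultimately show ?thesis by linarith
        qed
        ultimately show ?thesis unfolding r_def by (simp add: power2_norm_eq_inner)
      qed
      have "k * (mu * r\<^sup>2) \<le> k * (gF n ps \<bullet> (ps - us))" using m1 k0 by (rule mult_left_mono)
      also have "\<dots> \<le> - lam * (r\<^sup>2 - Mb * r)" unfolding kg using ip lam_range
        by (simp add: mult_left_mono)
      finally have "a * r * r \<le> lam * Mb * r" unfolding a_def by (simp add: power2_eq_square algebra_simps)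
      then show ?thesis
      proof (cases "r = 0")
        case True then show ?thesis using lam_range Mb0 r_def by simp
      next
        case False then have "r > 0" unfolding r_def by simp
        then show ?thesis using \<open>a * r * r \<le> lam * Mb * r\<close> unfolding r_def by (simp add: mult_right_le_imp_le)
      qed
    qed
    define eps where "eps = 1 - etaL * a + etaL"
    define c1 where "c1 = etaL\<^sup>2 + etaL\<^sup>2 * lam\<^sup>2"
    define c2 where "c2 = (4 * etaL\<^sup>2 * lam\<^sup>2 + 2 * etaL * lam\<^sup>2) / mu"
    define G where "G = ((1 - lam / 2) * G0 + lam * (G0 / mu + Mb))\<^sup>2"
    define Psi where "Psi = (\<lambda>x. (norm (pe (Suc t) x - ps))\<^sup>2)"
    define Dsq where "Dsq = (\<lambda>x. (norm (pe t x - ps))\<^sup>2)"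
    define Xn where "Xn = (\<lambda>x. norm (gF n (pe t x)))"
    define Yn where "Yn = (\<lambda>x. norm (gF n (gl t x)))"
    define Zn where "Zn = (\<lambda>x. norm (gF n (pe (Suc t) x)))"
    define Phi where "Phi = (\<lambda>x. if 1 \<le> etaL * a
        then (1 - 1/(etaL*a)\<^sup>2) * ((a/mu) * Xn x + lam*Mb)\<^sup>2 + 1/(etaL*a)\<^sup>2 * ((a/mu) * Zn x + lam*Mb)\<^sup>2
        else (k * Xn x + lam/mu * Yn x + lam*Mb)\<^sup>2)"
    define dFx where "dFx = (\<lambda>x. dF (gl t x))"
    have tT: "t \<le> T" "Suc t \<le> T" using t by auto
    have pem: "pe t \<in> borel_measurable M" "pe (Suc t) \<in> borel_measurable M"
      unfolding pe_def using persm[OF n tT(1)] persm[OF n tT(2)] by auto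
    have glm: "gl t \<in> borel_measurable M" unfolding gl_def using globm[OF tT(1)] .
    have Xm: "Xn \<in> borel_measurable M" unfolding Xn_def
      using measurable_compose[OF pem(1) measg[OF n]] by measurable
    have Ym: "Yn \<in> borel_measurable M" unfolding Yn_def
      using measurable_compose[OF glm measg[OF n]] by measurable
    have Zm: "Zn \<in> borel_measurable M" unfolding Zn_def
      using measurable_compose[OF pem(2) measg[OF n]] by measurable
    have iX: "integrable M (\<lambda>x. (Xn x)\<^sup>2)" "P.expectation (\<lambda>x. (Xn x)\<^sup>2) \<le> G0\<^sup>2"
      using grad_bd_pers[OF n tT(1)] unfolding Xn_def pe_def by auto
    have iY: "integrable M (\<lambda>x. (Yn x)\<^sup>2)" "P.expectation (\<lambda>x. (Yn x)\<^sup>2) \<le> G0\<^sup>2"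
      using grad_bd_glob[OF n tT(1)] unfolding Yn_def gl_def by auto
    have iZ: "integrable M (\<lambda>x. (Zn x)\<^sup>2)" "P.expectation (\<lambda>x. (Zn x)\<^sup>2) \<le> G0\<^sup>2"
      using grad_bd_pers[OF n tT(2)] unfolding Zn_def pe_def by auto
    have pe_suc: "pe (Suc t) x = pe t x - etaL *\<^sub>R (k *\<^sub>R gF n (pe t x) + lam *\<^sub>R (pe t x - gl t x))" for x
      unfolding pe_def gl_def k_def by simp
    have pw: "Psi x \<le> eps * Dsq x + c1 * Phi x + c2 * dFx x" for x
    proof -
      have "(norm (pe t x - etaL *\<^sub>R (k *\<^sub>R gF n (pe t x) + lam *\<^sub>R (pe t x - gl t x)) - ps))\<^sup>2
        \<le> (1 - etaL*a + etaL) * (norm (pe t x - ps))\<^sup>2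
         + (etaL\<^sup>2 + etaL\<^sup>2*lam\<^sup>2) * (if 1 \<le> etaL*a then (1 - 1/(etaL*a)\<^sup>2) * ((a/mu) * norm (gF n (pe t x)) + lam*Mb)\<^sup>2
             + 1/(etaL*a)\<^sup>2 * ((a/mu)*norm (gF n (pe (Suc t) x)) + lam*Mb)\<^sup>2
           else (k * norm (gF n (pe t x)) + lam/mu * norm (gF n (gl t x)) + lam*Mb)\<^sup>2)
         + (4*etaL\<^sup>2*lam\<^sup>2 + 2*etaL*lam\<^sup>2)/mu * dF (gl t x)"
      proof (rule core[OF k_def a_def lam_range mu_pos etaL_pos apos Mb0])
        show "mu * (norm (pe t x - us))\<^sup>2 \<le> gF n (pe t x) \<bullet> (pe t x - us)" unfolding us_def by (rule h1g[OF n])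
        show "norm (pe t x - us) \<le> norm (gF n (pe t x)) / mu" unfolding us_def by (rule h2g[OF n])
        show "norm (gl t x - us) \<le> norm (gF n (gl t x)) / mu" unfolding us_def by (rule h2g[OF n])
        show "norm (pe t x - etaL *\<^sub>R (k *\<^sub>R gF n (pe t x) + lam *\<^sub>R (pe t x - gl t x)) - us)
            \<le> norm (gF n (pe (Suc t) x)) / mu" unfolding us_def pe_suc[symmetric] by (rule h2g[OF n])
        show "a * (norm (pe t x - ps))\<^sup>2 \<le> (pe t x - ps) \<bullet> (k *\<^sub>R gF n (pe t x) + lam *\<^sub>R (pe t x - wstar))"
          by (rule h5)
        show "a * norm (ps - us) \<le> lam * Mb" by (rule h6)
        show "(norm (gl t x - wstar))\<^sup>2 \<le> 2 / mu * dF (gl t x)" by (rule h7g)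
      qed
      then show ?thesis unfolding Psi_def Dsq_def Phi_def dFx_def eps_def c1_def c2_def Xn_def Yn_def Zn_def
        pe_suc[symmetric] by simp
    qed
    have c1nn: "0 \<le> c1" unfolding c1_def by simp
    have Xn0: "0 \<le> Xn x" "0 \<le> Yn x" "0 \<le> Zn x" for x unfolding Xn_def Yn_def Zn_def by auto
    have r0: "0 \<le> norm (ps - us)" by simp
    have nD: "norm (pe \<tau> x - ps) \<le> 1/mu * norm (gF n (pe \<tau> x)) + norm (ps - us)" for \<tau> x
    proof -
      have "norm (pe \<tau> x - ps) = norm ((pe \<tau> x - us) + (us - ps))" by simp
      also have "\<dots> \<le> norm (pe \<tau> x - us) + norm (us - ps)" by (rule norm_triangle_ineq)
      also have "\<dots> \<le> norm (gF n (pe \<tau> x)) / mu + norm (ps - us)"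
        using h2g[OF n, of "pe \<tau> x"] unfolding us_def by (simp add: norm_minus_commute)
      finally show ?thesis by simp
    qed
    have iPsi: "integrable M Psi" unfolding Psi_def
    proof (rule int_sq_bound[OF prob _ Zm iZ(1) _ _ _ r0])
      show "(\<lambda>x. norm (pe (Suc t) x - ps)) \<in> borel_measurable M" using pem(2) by measurable
      show "0 \<le> norm (pe (Suc t) x - ps) \<and> norm (pe (Suc t) x - ps) \<le> 1/mu * Zn x + norm (ps - us)" for x
        unfolding Zn_def using nD by simp
    qed (use Xn0 mu_pos in auto)
    have iD: "integrable M Dsq" unfolding Dsq_def
    proof (rule int_sq_bound[OF prob _ Xm iX(1) _ _ _ r0])
      show "(\<lambda>x. norm (pe t x - ps)) \<in> borel_measurable M" using pem(1) by measurable
      show "0 \<le> norm (pe t x - ps) \<and> norm (pe t x - ps) \<le> 1/mu * Xn x + norm (ps - us)" for x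
        unfolding Xn_def using nD by simp
    qed (use Xn0 mu_pos in auto)
    have GG: "(a/mu) * G0 + lam * Mb = (1 - lam / 2) * G0 + lam * (G0 / mu + Mb)"
      using mu_pos unfolding a_def k_def by (simp add: field_simps)
    have GG2: "(k + lam/mu) * G0 + lam * Mb = (1 - lam / 2) * G0 + lam * (G0 / mu + Mb)"
      unfolding k_def by (simp add: algebra_simps)
    have lMb: "0 \<le> lam * Mb" using lam_range Mb0 by simp
    have Phi_ok: "integrable M Phi \<and> P.expectation Phi \<le> G"
    proof (cases "1 \<le> etaL * a")
      case True
      define th where "th = 1 - 1/(etaL*a)\<^sup>2"
      have ea: "(etaL*a)\<^sup>2 \<ge> 1" using True by (simp add: one_le_power)
      have th0: "0 \<le> th" unfolding th_def using ea by (simp add: field_simps)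
      have PhiE: "Phi = (\<lambda>x. th * ((a/mu) * Xn x + lam*Mb)\<^sup>2 + 1/(etaL*a)\<^sup>2 * ((a/mu) * Zn x + lam*Mb)\<^sup>2)"
        unfolding Phi_def th_def using True by simp
      have A: "integrable M (\<lambda>x. ((a/mu) * Xn x + lam*Mb)\<^sup>2) \<and> P.expectation (\<lambda>x. ((a/mu) * Xn x + lam*Mb)\<^sup>2) \<le> G"
        using exp_sq[OF prob Xm Xm _ _ iX(1) iX(1) iX(2) iX(2) G0_nonneg, of "a/mu" 0 "lam*Mb"] Xn0 apos mu_pos lMb
        unfolding G_def GG[symmetric] by simp
      have B: "integrable M (\<lambda>x. ((a/mu) * Zn x + lam*Mb)\<^sup>2) \<and> P.expectation (\<lambda>x. ((a/mu) * Zn x + lam*Mb)\<^sup>2) \<le> G"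
        using exp_sq[OF prob Zm Zm _ _ iZ(1) iZ(1) iZ(2) iZ(2) G0_nonneg, of "a/mu" 0 "lam*Mb"] Xn0 apos mu_pos lMb
        unfolding G_def GG[symmetric] by simp
      have "P.expectation Phi = th * P.expectation (\<lambda>x. ((a/mu) * Xn x + lam*Mb)\<^sup>2)
          + 1/(etaL*a)\<^sup>2 * P.expectation (\<lambda>x. ((a/mu) * Zn x + lam*Mb)\<^sup>2)"
        unfolding PhiE using A B by simp
      also have "\<dots> \<le> th * G + 1/(etaL*a)\<^sup>2 * G"
        using A B th0 by (intro add_mono mult_left_mono) auto
      also have "\<dots> = G" unfolding th_def by (simp add: algebra_simps)
      finally show ?thesis unfolding PhiE using A B by simp
    next
      case False
      have PhiE: "Phi = (\<lambda>x. (k * Xn x + lam/mu * Yn x + lam*Mb)\<^sup>2)"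
        unfolding Phi_def using False by simp
      show ?thesis
        using exp_sq[OF prob Xm Ym _ _ iX(1) iY(1) iX(2) iY(2) G0_nonneg, of k "lam/mu" "lam*Mb"] Xn0 k0 lam_range mu_pos lMb
        unfolding G_def GG2[symmetric] PhiE by simp
    qed
    have Fm: "(\<lambda>x. Fs m (gl t x)) \<in> borel_measurable M" if "m \<in> {..<N}" for m
      using measurable_compose[OF glm measF] that by simp
    have idF: "integrable M dFx"
    proof (rule Bochner_Integration.integrable_bound[of _ "\<lambda>x. (\<Sum>m<N. (1/mu + 1) * (norm (gF m (gl t x)))\<^sup>2 + Mb\<^sup>2) / real N"])
      show "integrable M (\<lambda>x. (\<Sum>m<N. (1/mu + 1) * (norm (gF m (gl t x)))\<^sup>2 + Mb\<^sup>2) / real N)"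
        using grad_bd_glob[OF _ tT(1)] unfolding gl_def by (intro integrable_divide_zero integrable_sum) auto
      show "dFx \<in> borel_measurable M" unfolding dFx_def dF_def
        using Fm by (intro borel_measurable_diff borel_measurable_divide borel_measurable_sum) auto
      show "AE x in M. norm (dFx x) \<le> norm ((\<Sum>m<N. (1/mu + 1) * (norm (gF m (gl t x)))\<^sup>2 + Mb\<^sup>2) / real N)"
      proof (rule AE_I2)
        fix x
        define B where "B = (\<Sum>m<N. (1/mu + 1) * (norm (gF m (gl t x)))\<^sup>2 + Mb\<^sup>2) / real N"
        have "0 \<le> dFx x" "dFx x \<le> B"
          unfolding dFx_def B_def using dF0 dFup by auto
        then have "norm (dFx x) \<le> norm B" by simp
        then show "norm (dFx x) \<le> norm ((\<Sum>m<N. (1/mu + 1) * (norm (gF m (gl t x)))\<^sup>2 + Mb\<^sup>2) / real N)"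
          unfolding B_def .
      qed
    qed
    have iPhi: "integrable M Phi" using Phi_ok by simp
    have "P.expectation Psi \<le> P.expectation (\<lambda>x. eps * Dsq x + c1 * Phi x + c2 * dFx x)"
      by (rule integral_mono[OF iPsi _ pw]) (use iD iPhi idF in simp)
    also have "\<dots> = eps * P.expectation Dsq + c1 * P.expectation Phi + c2 * P.expectation dFx"
    proof -
      have "P.expectation (\<lambda>x. eps * Dsq x + c1 * Phi x + c2 * dFx x)
          = P.expectation (\<lambda>x. eps * Dsq x + c1 * Phi x) + P.expectation (\<lambda>x. c2 * dFx x)"
        by (rule Bochner_Integration.integral_add) (use iD iPhi idF in simp_all)
      also have "P.expectation (\<lambda>x. eps * Dsq x + c1 * Phi x) = P.expectation (\<lambda>x. eps * Dsq x) + P.expectation (\<lambda>x. c1 * Phi x)"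
        by (rule Bochner_Integration.integral_add) (use iD iPhi in simp_all)
      finally show ?thesis by simp
    qed
    also have "\<dots> \<le> eps * P.expectation Dsq + c1 * G + c2 * P.expectation dFx"
      using Phi_ok c1nn by (simp add: mult_left_mono)
    finally have fin: "P.expectation Psi \<le> eps * P.expectation Dsq + c1 * G + c2 * P.expectation dFx" .
    show "prob_space.expectation M (\<lambda>x. (norm (pers gF N C etaG w0 z etaL lam p0 n (Suc t) x - pstar n))\<^sup>2)
         \<le> (1 - etaL * ((1 - lam / 2) * mu + lam) + etaL) *
             prob_space.expectation M (\<lambda>x. (norm (pers gF N C etaG w0 z etaL lam p0 n t x - pstar n))\<^sup>2)
           + (etaL\<^sup>2 + etaL\<^sup>2 * lam\<^sup>2) * ((1 - lam / 2) * G0 + lam * (G0 / mu + Mb))\<^sup>2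
           + (4 * etaL\<^sup>2 * lam\<^sup>2 + 2 * etaL * lam\<^sup>2) / mu *
             prob_space.expectation M (\<lambda>x. (\<Sum>m<N. Fs m (glob gF N C etaG w0 z t x)) / real N
                    - (\<Sum>m<N. Fs m wstar) / real N)"
      using fin unfolding Psi_def Dsq_def dFx_def dF_def eps_def c1_def c2_def G_def pe_def gl_def ps_def a_def k_def .
  next
    assume "mu > 2"
    show "strict_mono_on {0..2} (\<lambda>l. 1 - etaL * ((1 - l / 2) * mu + l) + etaL)"
    proof (rule strict_mono_onI)
      fix r s :: real assume "r \<in> {0..2}" "s \<in> {0..2}" "r < s"
      have "0 < etaL * ((s - r) * (mu / 2 - 1))" using etaL_pos \<open>r < s\<close> \<open>mu > 2\<close> by simp
      moreover have "(1 - etaL * ((1 - s / 2) * mu + s) + etaL) - (1 - etaL * ((1 - r / 2) * mu + r) + etaL)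
          = etaL * ((s - r) * (mu / 2 - 1))" by (simp add: algebra_simps diff_divide_distrib)
      ultimately show "1 - etaL * ((1 - r / 2) * mu + r) + etaL < 1 - etaL * ((1 - s / 2) * mu + s) + etaL"
        by linarith
    qed
  qed
qed


end
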